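(* Let $q=3^m$ with $m$ a positive integer. Let $b\in\mathbb{F}_q^*$ and $\delta\in\mathbb{F}_{q^2}$. Put $$A=-b,\quad B=b\delta^{q+1}(\delta^q+\delta),\quad C=(\delta^q-\delta)^2-b^{-1},$$ and suppose that $P(x)=b(x^q+x+\delta)^{q+2}-x$ permutes $\mathbb{F}_{q^2}$. (1) If $C=0$, then the compositional inverse of $P(x)$ over $\mathbb{F}_{q^2}$ is $$P^{-1}(x)=b\left(A^{-q/3}\left((x^q+x)-B\right)^{q/3}+\delta\right)^{q+2}-x.$$ (2) If $C$ is not a square in $\mathbb{F}_q$, then the compositional inverse of $P(x)$ over $\mathbb{F}_{q^2}$ is $$P^{-1}(x)=b\left(\delta+\frac{N_{3^m/3}(C)}{1-N_{3^m/3}(C)}\sum_{i=0}^{m-1}A^{-3^i}C^{-\frac{3^{i+1}-1}{2}}\left(x^q+x-B\right)^{3^i}\right)^{q+2}-x.$$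
   Context: For $a\in\mathbb{F}_{3^m}$, $N_{3^m/3}(a)=a^{(3^m-1)/2}$ is the norm to $\mathbb{F}_3$. The compositional inverse of a permutation polynomial $f$ of $\mathbb{F}_{Q}$ is the unique polynomial $f^{-1}$ (modulo $x^Q-x$) with $f(f^{-1}(c))=f^{-1}(f(c))=c$ for all $c\in\mathbb{F}_Q$. *)

theory Defs
  imports Main
begin

text \<open>Norm from F_{3^m} to F_3: N(a) = a^((3^m-1)/2).\<close>
definition norm3 :: "nat \<Rightarrow> 'a::field \<Rightarrow> 'a" where
  "norm3 m a = a ^ ((3 ^ m - 1) div 2)"

definition comp_inverse_on :: "('a \<Rightarrow> 'a) \<Rightarrow> ('a \<Rightarrow> 'a) \<Rightarrow> bool" where
  "comp_inverse_on f g \<longleftrightarrow> (\<forall>c. f (g c) = c \<and> g (f c) = c)"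

end

theory Submission
  imports Defs "HOL-Computational_Algebra.Polynomial"
begin

lemma card_zero_char:
  "of_nat (card (UNIV :: 'a::{field,finite} set)) = (0::'a)"
proof -
  have b: "bij_betw (\<lambda>y::'a. y + 1) UNIV UNIV"
    by (rule bij_betw_byWitness[where f'="\<lambda>y. y - 1"]) auto
  have "(\<Sum>y\<in>UNIV. y + 1) = (\<Sum>y\<in>(UNIV::'a set). y)"
    using sum.reindex_bij_betw[OF b, of "\<lambda>y. y"] by simp
  then show ?thesis by (simp add: sum.distrib)
qed

lemma fermat_field:
  fixes x :: "'a::{field,finite}"
  shows "x ^ card (UNIV :: 'a set) = x"
proof (cases "x = 0")
  case True then show ?thesis by (simp add: finite_UNIV_card_ge_0)
next
  case False
  let ?S = "UNIV - {0::'a}"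
  have b: "bij_betw (\<lambda>y. x * y) ?S ?S"
    by (rule bij_betw_byWitness[where f'="\<lambda>y. y / x"]) (use False in auto)
  have "(\<Prod>y\<in>?S. x * y) = (\<Prod>y\<in>?S. y)"
    using prod.reindex_bij_betw[OF b, of "\<lambda>y. y"] by simp
  then have "x ^ card ?S * (\<Prod>y\<in>?S. y) = 1 * (\<Prod>y\<in>?S. y)"
    by (simp add: prod.distrib)
  moreover have "(\<Prod>y\<in>?S. y) \<noteq> 0" by simp
  ultimately have "x ^ card ?S = 1" by (metis mult_cancel_right)
  moreover have "card ?S + 1 = card (UNIV :: 'a set)"
    by (simp add: card_Diff_singleton finite_UNIV_card_ge_0 Suc_leI)
  ultimately show ?thesis by (metis power_add power_one_right mult_1)
qed

lemma frob3:
  fixes x y :: "'a::comm_ring_1"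
  assumes "(3::'a) = 0"
  shows "(x + y) ^ (3 ^ k) = x ^ (3 ^ k) + y ^ (3 ^ k)"
proof (induction k)
  case 0 then show ?case by simp
next
  case (Suc k)
  have c: "(a + b) ^ 3 = a ^ 3 + b ^ 3" for a b :: 'a
  proof -
    have "(a + b) ^ 3 = a ^ 3 + b ^ 3 + 3 * (a^2*b + a*b^2)"
      by (simp add: algebra_simps power2_eq_square power3_eq_cube)
    then show ?thesis using assms by simp
  qed
  have "(x + y) ^ (3 ^ Suc k) = ((x + y) ^ (3 ^ k)) ^ 3"
    by (simp add: power_mult[symmetric] mult.commute)
  also have "\<dots> = (x ^ (3 ^ k)) ^ 3 + (y ^ (3 ^ k)) ^ 3" using Suc c by simp
  also have "\<dots> = x ^ (3 ^ Suc k) + y ^ (3 ^ Suc k)"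
    by (simp add: power_mult[symmetric] mult.commute)
  finally show ?case .
qed

lemma frob3_minus:
  fixes x y :: "'a::comm_ring_1"
  assumes "(3::'a) = 0"
  shows "(- x) ^ (3 ^ k) = - (x ^ (3 ^ k))"
  by simp

lemma frob3_diff:
  fixes x y :: "'a::comm_ring_1"
  assumes "(3::'a) = 0"
  shows "(x - y) ^ (3 ^ k) = x ^ (3 ^ k) - y ^ (3 ^ k)"
  using frob3[OF assms, of x "-y" k] frob3_minus[OF assms, of y k] by simp


lemma ring_ident:
  fixes b e d xq x :: "'a::field"
  assumes "(3::'a) = 0" "b \<noteq> 0"
  shows "b*((xq+x)+e)*((xq+x)+d)^2 - xq + (b*((xq+x)+d)*((xq+x)+e)^2 - x) - b*(d*e)*(d+e)
        = - b * ((xq+x)^3 - ((d-e)^2 - inverse b)*(xq+x))"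
proof -
  define u where "u = xq + x"
  have "b*(u+e)*(u+d)^2 - xq + (b*(u+d)*(u+e)^2 - x) - b*(d*e)*(d+e)
        = - b * u^3 + b*(d-e)^2*u - b * inverse b * u + 3 * (b*(u^3 + (d+e)*u^2 + 2*d*e*u))"
    using assms(2) by (simp add: u_def algebra_simps power2_eq_square power3_eq_cube)
  then show ?thesis using assms by (simp add: u_def algebra_simps)
qed

lemma div_lemma: "(3 ^ (i + 1) - 1) div 2 = 3 ^ i + (3 ^ i - 1) div (2::nat)"
proof -
  have "odd ((3::nat) ^ i)" by simp
  then obtain k where k: "(3::nat) ^ i = 2 * k + 1" by (metis oddE)
  show ?thesis by (simp add: k)
qed

lemma tele:
  fixes C u :: "'a::field"
  assumes "(3::'a) = 0" "C \<noteq> 0"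
  shows "(\<Sum>i<m. inverse C ^ ((3^(i+1)-1) div 2) * (u^3 - C*u)^(3^i))
       = inverse C ^ ((3^m - 1) div 2) * u^(3^m) - u"
proof -
  define f where "f i = inverse C ^ ((3^i-1) div 2) * u^(3^i)" for i :: nat
  have "inverse C ^ ((3^(i+1)-1) div 2) * (u^3 - C*u)^(3^i) = f (Suc i) - f i" for i
  proof -
    have "(u^3 - C*u)^(3^i) = u^(3^(Suc i)) - C^(3^i)*u^(3^i)"
      using frob3_diff[OF assms(1)] by (simp add: power_mult[symmetric] power_mult_distrib mult.commute)
    moreover have "inverse C ^ ((3^(i+1)-1) div 2) * C^(3^i) = inverse C ^ ((3^i-1) div 2)"
      using assms(2) unfolding div_lemma by (simp add: power_add power_inverse field_simps)
    ultimately show ?thesis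
      unfolding f_def by (metis (no_types, lifting) right_diff_distrib mult.assoc add.commute Suc_eq_plus1)
  qed
  then have "(\<Sum>i<m. inverse C ^ ((3^(i+1)-1) div 2) * (u^3 - C*u)^(3^i)) = (\<Sum>i<m. f (Suc i) - f i)"
    by simp
  also have "\<dots> = f m - f 0" by (rule sum_lessThan_telescope)
  finally show ?thesis by (simp add: f_def)
qed


lemma roots_bound_q:
  fixes s :: "'a::field"
  assumes "q > 1"
  shows "card {x::'a. x ^ q + s * x = 0} \<le> q"
proof -
  define p where "p = monom (1::'a) q + [:0, s:]"
  have pe: "poly p x = x ^ q + s * x" for x by (simp add: p_def poly_monom)
  have "coeff p q = 1" using assms by (simp add: p_def coeff_pCons split: nat.split)
  then have "p \<noteq> 0" by auto
  moreover have "degree p \<le> q"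
  proof -
    have "degree [:0, s:] \<le> Suc (degree [:s:])" by (rule degree_pCons_le)
    then have "degree [:0, s:] \<le> q" using assms by simp
    then show ?thesis unfolding p_def
      by (rule degree_add_le[OF degree_monom_le])
  qed
  ultimately have "card {x. poly p x = 0} \<le> q" using card_poly_roots_bound[of p] by linarith
  then show ?thesis by (simp add: pe)
qed

lemma card_Fq:
  fixes m q :: nat
  assumes m: "m > 0" and qd: "q = 3 ^ m" and card: "card (UNIV :: 'a::{field,finite} set) = q ^ 2"
    and three: "(3::'a) = 0"
  shows "card {x::'a. x ^ q = x} = q"
proof -
  have q1: "q > 1" using m qd one_less_power[of "3::nat" m] by simp
  have addq: "(x + y) ^ q = x ^ q + y ^ q" for x y :: 'a using frob3[OF three] qd by simp
  have diffq: "(x - y) ^ q = x ^ q - y ^ q" for x y :: 'a using frob3_diff[OF three] qd by simp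
  have qq: "(x ^ q) ^ q = x" for x :: 'a
    using fermat_field[of x] card by (simp add: power_mult[symmetric] power2_eq_square)
  define K where "K = {x::'a. x ^ q + 1 * x = 0}"
  define F where "F = {x::'a. x ^ q = x}"
  have cK: "card K \<le> q" unfolding K_def by (rule roots_bound_q[OF q1])
  have "F = {x::'a. x ^ q + (-1) * x = 0}" unfolding F_def by (auto simp: algebra_simps)
  then have cF: "card F \<le> q" using roots_bound_q[OF q1, of "-1::'a"] by simp
  have U: "UNIV = (\<Union>t\<in>F. {x. x ^ q + x = t})"
    by (auto simp: F_def addq qq add.commute)
  have fib: "card {x. x ^ q + x = t} \<le> q" for t :: 'a
  proof (cases "\<exists>x0. x0 ^ q + x0 = t")
    case False then show ?thesis by simp
  next
    case True
    then obtain x0 where x0: "x0 ^ q + x0 = t" by blast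
    have "{x. x ^ q + x = t} \<subseteq> (\<lambda>k. k + x0) ` K"
    proof
      fix x assume "x \<in> {x. x ^ q + x = t}"
      then have "x - x0 \<in> K" using x0 by (simp add: K_def diffq algebra_simps)
      then show "x \<in> (\<lambda>k. k + x0) ` K" by (auto intro!: image_eqI[where x="x - x0"])
    qed
    then have "card {x. x ^ q + x = t} \<le> card ((\<lambda>k. k + x0) ` K)" by (intro card_mono) auto
    also have "\<dots> \<le> card K" by (rule card_image_le) simp
    finally show ?thesis using cK by simp
  qed
  have "q * q = card (UNIV :: 'a set)" using card by (simp add: power2_eq_square)
  also have "\<dots> \<le> (\<Sum>t\<in>F. card {x. x ^ q + x = t})" unfolding U by (rule card_UN_le) simp
  also have "\<dots> \<le> (\<Sum>t\<in>F. q)" by (rule sum_mono) (rule fib)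
  also have "\<dots> = card F * q" by simp
  finally have "q \<le> card F" using q1 by (simp add: mult.commute)
  then show ?thesis using cF by (simp add: F_def)
qed


lemma comp_inv_from_left:
  assumes "bij P" "\<And>x. g (P x) = x"
  shows "comp_inverse_on P g"
  unfolding comp_inverse_on_def
proof
  fix c
  obtain x where "c = P x" using assms(1) by (metis bij_pointE)
  then show "P (g c) = c \<and> g (P c) = c" using assms(2) by simp
qed

theorem theorem3p17:
  fixes b \<delta> :: "'a::{field,finite}" and m q :: nat
    and A B C :: 'a and P :: "'a \<Rightarrow> 'a"
  assumes m_pos: "m > 0"
    and q_def: "q = 3 ^ m"
    and card: "card (UNIV :: 'a set) = q ^ 2"
    and b_Fq: "b ^ q = b" and b_nz: "b \<noteq> 0"
    and A_def: "A = - b"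
    and B_def: "B = b * \<delta> ^ (q + 1) * (\<delta> ^ q + \<delta>)"
    and C_def: "C = (\<delta> ^ q - \<delta>) ^ 2 - inverse b"
    and P_def: "P = (\<lambda>x. b * (x ^ q + x + \<delta>) ^ (q + 2) - x)"
    and perm: "bij P"
  shows "(C = 0 \<longrightarrow>
            comp_inverse_on P
              (\<lambda>x. b * (inverse A ^ (q div 3) * ((x ^ q + x) - B) ^ (q div 3) + \<delta>) ^ (q + 2) - x))
       \<and> ((\<not> (\<exists>y. y ^ q = y \<and> y ^ 2 = C)) \<longrightarrow>
            comp_inverse_on P
              (\<lambda>x. b * (\<delta> + norm3 m C / (1 - norm3 m C) *
                  (\<Sum>i<m. inverse A ^ (3 ^ i) * inverse C ^ ((3 ^ (i + 1) - 1) div 2)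
                           * (x ^ q + x - B) ^ (3 ^ i))) ^ (q + 2) - x))"
proof -
  have "of_nat (3 ^ (m * 2)) = (0::'a)"
    using card_zero_char[where 'a='a] card q_def by (simp add: power_mult)
  then have "(3::'a) ^ (m * 2) = 0" by simp
  then have three: "(3::'a) = 0" by simp
  have addq: "(x + y) ^ q = x ^ q + y ^ q" for x y :: 'a using frob3[OF three] q_def by simp
  have diffq: "(x - y) ^ q = x ^ q - y ^ q" for x y :: 'a using frob3_diff[OF three] q_def by simp
  have qq: "(x ^ q) ^ q = x" for x :: 'a
    using fermat_field[of x] card by (simp add: power_mult[symmetric] power2_eq_square)
  have A_nz: "A \<noteq> 0" using b_nz A_def by simp
  have Tq: "(x ^ q + x) ^ q = x ^ q + x" for x :: 'a by (simp add: addq qq add.commute)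
  have main: "(P x) ^ q + P x - B = A * ((x ^ q + x) ^ 3 - C * (x ^ q + x))" for x :: 'a
  proof -
    define u where "u = x ^ q + x"
    define z where "z = u + \<delta>"
    have uq: "u ^ q = u" using Tq u_def by simp
    have zq: "z ^ q = u + \<delta> ^ q" by (simp add: z_def addq uq)
    have Px: "P x = b * (z ^ q * z ^ 2) - x" by (simp add: P_def z_def u_def power_add power2_eq_square)
    have "(z ^ q * z ^ 2) ^ q = (z ^ q) ^ q * (z ^ q) ^ 2"
      by (simp add: power_mult_distrib power_mult[symmetric] mult.commute)
    then have "(z ^ q * z ^ 2) ^ q = z * (u + \<delta> ^ q) ^ 2" by (metis qq zq)
    then have Pxq: "(P x) ^ q = b * (z * (u + \<delta> ^ q) ^ 2) - x ^ q"
      by (simp add: Px diffq power_mult_distrib b_Fq)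
    have "(P x) ^ q + P x - B = b*(u+\<delta>)*(u+\<delta>^q)^2 - x^q + (b*(u+\<delta>^q)*(u+\<delta>)^2 - x)
        - b*(\<delta>^q*\<delta>)*(\<delta>^q+\<delta>)"
    proof -
      have "(P x) ^ q + P x - B = b * (z * (u + \<delta> ^ q) ^ 2) - x ^ q + (b * ((u + \<delta> ^ q) * z ^ 2) - x) - B"
        unfolding Pxq by (simp only: Px zq)
      then show ?thesis by (simp add: B_def z_def power_add mult.commute mult.left_commute mult.assoc)
    qed
    also have "\<dots> = - b * (u^3 - ((\<delta>^q-\<delta>)^2 - inverse b)*u)"
      using ring_ident[OF three b_nz, of "x^q" x \<delta> "\<delta>^q"] by (simp add: u_def)
    finally show ?thesis by (simp add: A_def C_def u_def)
  qed
  have part1: "C = 0 \<longrightarrow>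
            comp_inverse_on P
              (\<lambda>x. b * (inverse A ^ (q div 3) * ((x ^ q + x) - B) ^ (q div 3) + \<delta>) ^ (q + 2) - x)"
  proof
    assume C0: "C = 0"
    show "comp_inverse_on P
              (\<lambda>x. b * (inverse A ^ (q div 3) * ((x ^ q + x) - B) ^ (q div 3) + \<delta>) ^ (q + 2) - x)"
    proof (rule comp_inv_from_left[OF perm])
      fix x :: 'a
      define u where "u = x ^ q + x"
      have uq: "u ^ q = u" using Tq u_def by simp
      have q3: "3 * (q div 3) = q" using q_def m_pos by (cases m) auto
      have "inverse A ^ (q div 3) * ((P x ^ q + P x) - B) ^ (q div 3) = (inverse A * (A * u ^ 3)) ^ (q div 3)"
        using main[of x] C0 by (simp add: u_def power_mult_distrib)
      also have "\<dots> = u ^ (3 * (q div 3))" using A_nz by (simp add: power_mult mult.assoc[symmetric])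
      also have "\<dots> = u" using q3 uq by simp
      finally show "b * (inverse A ^ (q div 3) * ((P x ^ q + P x) - B) ^ (q div 3) + \<delta>) ^ (q + 2) - P x = x"
        by (simp add: P_def u_def)
    qed
  qed
  have part2: "(\<not> (\<exists>y. y ^ q = y \<and> y ^ 2 = C)) \<longrightarrow>
            comp_inverse_on P
              (\<lambda>x. b * (\<delta> + norm3 m C / (1 - norm3 m C) *
                  (\<Sum>i<m. inverse A ^ (3 ^ i) * inverse C ^ ((3 ^ (i + 1) - 1) div 2)
                           * (x ^ q + x - B) ^ (3 ^ i))) ^ (q + 2) - x)"
  proof
    assume nsq: "\<not> (\<exists>y. y ^ q = y \<and> y ^ 2 = C)"
    define N where "N = norm3 m C"
    have q0: "q > 0" using q_def by simp
    have C_nz: "C \<noteq> 0"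
    proof
      assume "C = 0"
      then have "(0::'a) ^ q = 0 \<and> (0::'a) ^ 2 = C" using q0 by simp
      then show False using nsq by blast
    qed
    have N_nz: "N \<noteq> 0" using C_nz by (simp add: N_def norm3_def)
    have N_ne1: "N \<noteq> 1"
    proof
      assume N1: "N = 1"
      define c where "c i = inverse C ^ ((3^(i+1)-1) div 2)" for i :: nat
      define p where "p = (\<Sum>i<m. monom (c i) (3^i))"
      define L where "L u = u^3 - C*u" for u :: 'a
      define F where "F = {x::'a. x ^ q = x}"
      have cF: "card F = q" unfolding F_def by (rule card_Fq[OF m_pos q_def card three])
      have pe: "poly p v = (\<Sum>i<m. c i * v^(3^i))" for v
        by (simp add: p_def poly_sum poly_monom)
      have roots: "L ` F \<subseteq> {v. poly p v = 0}"
      proof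
        fix v assume "v \<in> L ` F"
        then obtain u where u: "u \<in> F" "v = L u" by blast
        have "poly p v = inverse C ^ ((3^m - 1) div 2) * u^(3^m) - u"
          unfolding pe u(2) c_def L_def by (rule tele[OF three C_nz])
        also have "\<dots> = 0" using u(1) N1 q_def by (simp add: F_def N_def norm3_def power_inverse)
        finally show "v \<in> {v. poly p v = 0}" by simp
      qed
      have inj: "inj_on L F"
      proof (rule inj_onI)
        fix u u' assume u: "u \<in> F" "u' \<in> F" "L u = L u'"
        define w where "w = u - u'"
        have w3: "w ^ 3 = u ^ 3 - u' ^ 3" using frob3_diff[OF three, of u u' 1] unfolding w_def by (simp only: power_one_right)
        have "w * (w^2 - C) = w^3 - C*w" by (simp add: algebra_simps power2_eq_square power3_eq_cube)
        also have "\<dots> = L u - L u'" unfolding w3 by (simp add: L_def w_def algebra_simps)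
        finally have "w * (w^2 - C) = 0" using u(3) by simp
        moreover have "w ^ q = w" using u(1,2) by (simp add: F_def w_def diffq)
        ultimately have "w = 0" using nsq by auto
        then show "u = u'" by (simp add: w_def)
      qed
      have "coeff p 1 = c 0"
      proof -
        have "coeff p 1 = (\<Sum>i<m. if i = 0 then c i else 0)"
          unfolding p_def coeff_sum coeff_monom by (rule sum.cong) auto
        also have "\<dots> = c 0" using m_pos by (simp add: sum.delta)
        finally show ?thesis .
      qed
      then have p0: "p \<noteq> 0" using C_nz by (auto simp: c_def)
      have dp: "degree p \<le> 3 ^ (m - 1)"
        unfolding p_def
      proof (rule degree_sum_le)
        fix i assume "i \<in> {..<m}"
        then have "(3::nat) ^ i \<le> 3 ^ (m - 1)" by (intro power_increasing) auto
        then show "degree (monom (c i) (3 ^ i)) \<le> 3 ^ (m - 1)"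
          using degree_monom_le order.trans by blast
      qed simp
      have "q = card (L ` F)" using cF card_image[OF inj] by simp
      also have "\<dots> \<le> card {v. poly p v = 0}" by (rule card_mono[OF _ roots]) simp
      also have "\<dots> \<le> degree p" by (rule card_poly_roots_bound[OF p0])
      also have "\<dots> \<le> 3 ^ (m - 1)" by (rule dp)
      finally have "q \<le> 3 ^ (m - 1)" .
      then have "m \<le> m - 1" using q_def power_le_imp_le_exp[of 3 m "m-1"] by simp
      then show False using m_pos by simp
    qed
    have tel: "(\<Sum>i<m. inverse A ^ (3 ^ i) * inverse C ^ ((3 ^ (i + 1) - 1) div 2)
                           * (P x ^ q + P x - B) ^ (3 ^ i)) = inverse N * (x^q+x) - (x^q+x)" for x :: 'a
    proof -
      define u where "u = x ^ q + x"
      have uq: "u ^ q = u" using Tq u_def by simp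
      have "(\<Sum>i<m. inverse A ^ (3 ^ i) * inverse C ^ ((3 ^ (i + 1) - 1) div 2)
                           * (P x ^ q + P x - B) ^ (3 ^ i))
           = (\<Sum>i<m. inverse C ^ ((3^(i+1)-1) div 2) * (u^3 - C*u)^(3^i))"
        by (rule sum.cong) (use A_nz in \<open>simp_all add: main u_def power_mult_distrib power_inverse\<close>)
      also have "\<dots> = inverse C ^ ((3^m - 1) div 2) * u^(3^m) - u" by (rule tele[OF three C_nz])
      also have "\<dots> = inverse N * u - u" using uq q_def by (simp add: N_def norm3_def power_inverse)
      finally show ?thesis by (simp add: u_def)
    qed
    show "comp_inverse_on P
              (\<lambda>x. b * (\<delta> + norm3 m C / (1 - norm3 m C) *
                  (\<Sum>i<m. inverse A ^ (3 ^ i) * inverse C ^ ((3 ^ (i + 1) - 1) div 2)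
                           * (x ^ q + x - B) ^ (3 ^ i))) ^ (q + 2) - x)"
    proof (rule comp_inv_from_left[OF perm])
      fix x :: 'a
      define u where "u = x ^ q + x"
      have "N / (1 - N) * (inverse N * u - u) = u"
        using N_nz N_ne1 by (simp add: field_simps)
      then show "b * (\<delta> + norm3 m C / (1 - norm3 m C) *
                  (\<Sum>i<m. inverse A ^ (3 ^ i) * inverse C ^ ((3 ^ (i + 1) - 1) div 2)
                           * (P x ^ q + P x - B) ^ (3 ^ i))) ^ (q + 2) - P x = x"
      proof -
        have e: "\<delta> + N / (1 - N) *
                  (\<Sum>i<m. inverse A ^ (3 ^ i) * inverse C ^ ((3 ^ (i + 1) - 1) div 2)
                           * (P x ^ q + P x - B) ^ (3 ^ i)) = x ^ q + x + \<delta>"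
          using tel[of x] \<open>N / (1 - N) * (inverse N * u - u) = u\<close> by (simp add: u_def add.commute)
        show ?thesis unfolding N_def[symmetric] e by (simp add: P_def)
      qed
    qed
  qed
  show ?thesis using part1 part2 by blast
qed

end
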